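(* Let $G$ be a graph on $n$ vertices ($n$ even and sufficiently large) in which every vertex has at least $n-\sqrt{n}/4000$ neighbors, and let a perfect matching of $G$ be chosen uniformly at random. Then for every vertex $v$, there are at most $\sqrt{n}/9$ vertices $u$ such that the probability that $(u,v)$ is contained in the matching is less than $\frac{99}{100n}$. *)

theory Defs
  imports Complex_Main
begin

definition simple_graph :: "'a set \<Rightarrow> ('a \<Rightarrow> 'a \<Rightarrow> bool) \<Rightarrow> bool" where
  "simple_graph V E \<longleftrightarrow> finite V \<and> (\<forall>u v. E u v \<longrightarrow> E v u) \<and> (\<forall>u. \<not> E u u)
     \<and> (\<forall>u v. E u v \<longrightarrow> u \<in> V \<and> v \<in> V)"

definition degree :: "'a set \<Rightarrow> ('a \<Rightarrow> 'a \<Rightarrow> bool) \<Rightarrow> 'a \<Rightarrow> nat" where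
  "degree V E v = card {u \<in> V. E v u}"

definition perfect_matching :: "'a set \<Rightarrow> ('a \<Rightarrow> 'a \<Rightarrow> bool) \<Rightarrow> 'a set set \<Rightarrow> bool" where
  "perfect_matching V E M \<longleftrightarrow>
     M \<subseteq> {{u, v} | u v. u \<in> V \<and> v \<in> V \<and> E u v} \<and> (\<forall>v\<in>V. \<exists>!e. e \<in> M \<and> v \<in> e)"

definition perfect_matchings :: "'a set \<Rightarrow> ('a \<Rightarrow> 'a \<Rightarrow> bool) \<Rightarrow> 'a set set set" where
  "perfect_matchings V E = {M. perfect_matching V E M}"

definition match_prob :: "'a set \<Rightarrow> ('a \<Rightarrow> 'a \<Rightarrow> bool) \<Rightarrow> 'a \<Rightarrow> 'a \<Rightarrow> real" where
  "match_prob V E u v =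
     real (card {M \<in> perfect_matchings V E. {u, v} \<in> M}) / real (card (perfect_matchings V E))"

end

theory Submission
  imports Defs
begin

definition mdisj :: "'a set set \<Rightarrow> bool" where
  "mdisj M \<longleftrightarrow> (\<forall>e\<in>M. \<forall>f\<in>M. e \<noteq> f \<longrightarrow> e \<inter> f = {})"

definition edges :: "'a set \<Rightarrow> ('a \<Rightarrow> 'a \<Rightarrow> bool) \<Rightarrow> 'a set set" where
  "edges V E = {{u, v} | u v. u \<in> V \<and> v \<in> V \<and> E u v}"

definition partner :: "'a set set \<Rightarrow> 'a \<Rightarrow> 'a" where
  "partner M x = (THE y. {x, y} \<in> M)"

lemma mdisjD: "mdisj M \<Longrightarrow> e \<in> M \<Longrightarrow> f \<in> M \<Longrightarrow> e \<noteq> f \<Longrightarrow> e \<inter> f = {}"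
  unfolding mdisj_def by blast

lemma partner_unique:
  assumes "mdisj M" "{x,y} \<in> M" "x \<noteq> y"
  shows "partner M x = y"
  unfolding partner_def
proof (rule the_equality)
  show "{x, y} \<in> M" by fact
  fix z assume z: "{x,z} \<in> M"
  have "{x,z} \<inter> {x,y} \<noteq> {}" by auto
  then have "{x,z} = {x,y}" using assms(1) z assms(2) unfolding mdisj_def by metis
  then show "z = y" using assms(3) by (auto simp: doubleton_eq_iff)
qed

lemma partner_mem:
  assumes sg: "simple_graph V E" and "mdisj M" "M \<subseteq> edges V E" "e \<in> M" "x \<in> e"
  shows "e = {x, partner M x} \<and> partner M x \<noteq> x \<and> E x (partner M x) \<and> partner M x \<in> V \<and> x \<in> V"
proof -
  obtain a b where e: "e = {a,b}" "a \<in> V" "b \<in> V" "E a b" using assms(3,4) unfolding edges_def by blast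
  have ab: "a \<noteq> b" using sg e(4) unfolding simple_graph_def by auto
  have Eba: "E b a" using sg e(4) unfolding simple_graph_def by auto
  show ?thesis
  proof (cases "x = a")
    case True
    then have "partner M x = b" using partner_unique[OF assms(2), of a b] assms(4) e ab by auto
    then show ?thesis using True e ab by auto
  next
    case False
    then have xb: "x = b" using assms(5) e by auto
    then have "partner M x = a" using partner_unique[OF assms(2), of b a] assms(4) e ab
      by (auto simp: insert_commute)
    then show ?thesis using xb e ab Eba by auto
  qed
qed

lemma pm_char:
  assumes sg: "simple_graph V E"
  shows "perfect_matching V E M \<longleftrightarrow> M \<subseteq> edges V E \<and> mdisj M \<and> \<Union>M = V"
proof
  assume pm: "perfect_matching V E M"
  have ed: "M \<subseteq> edges V E" using pm unfolding perfect_matching_def edges_def by auto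
  have sub: "\<Union>M \<subseteq> V" using ed unfolding edges_def by auto
  have "mdisj M" unfolding mdisj_def
  proof (intro ballI impI)
    fix e f assume ef: "e \<in> M" "f \<in> M" "e \<noteq> f"
    show "e \<inter> f = {}"
    proof (rule ccontr)
      assume "e \<inter> f \<noteq> {}"
      then obtain z where z: "z \<in> e" "z \<in> f" by auto
      then have "z \<in> V" using sub ef by auto
      then show False using pm z ef unfolding perfect_matching_def by blast
    qed
  qed
  moreover have "V \<subseteq> \<Union>M" using pm unfolding perfect_matching_def by blast
  ultimately show "M \<subseteq> edges V E \<and> mdisj M \<and> \<Union>M = V" using ed sub by auto
next
  assume h: "M \<subseteq> edges V E \<and> mdisj M \<and> \<Union>M = V"
  show "perfect_matching V E M" unfolding perfect_matching_def
  proof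
    show "M \<subseteq> {{u, v} |u v. u \<in> V \<and> v \<in> V \<and> E u v}" using h unfolding edges_def by auto
    show "\<forall>v\<in>V. \<exists>!e. e \<in> M \<and> v \<in> e"
    proof
      fix v assume "v \<in> V"
      then obtain e where "e \<in> M" "v \<in> e" using h by auto
      moreover have "\<And>f. f \<in> M \<and> v \<in> f \<Longrightarrow> f = e" using h calculation unfolding mdisj_def by blast
      ultimately show "\<exists>!e. e \<in> M \<and> v \<in> e" by blast
    qed
  qed
qed

lemma partner_invol:
  assumes sg: "simple_graph V E" and "mdisj M" "M \<subseteq> edges V E" "x \<in> \<Union>M"
  shows "partner M (partner M x) = x"
proof -
  obtain e where e: "e \<in> M" "x \<in> e" using assms(4) by auto
  have 1: "e = {x, partner M x}" "partner M x \<noteq> x" using partner_mem[OF sg assms(2,3) e] by auto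
  have "partner M x \<in> e" using 1 by auto
  then have 2: "e = {partner M x, partner M (partner M x)}" "partner M (partner M x) \<noteq> partner M x"
    using partner_mem[OF sg assms(2,3) e(1)] by auto
  show ?thesis using 1 2 by (auto simp: doubleton_eq_iff)
qed

lemma finite_edges: "finite V \<Longrightarrow> finite (edges V E)"
proof -
  assume "finite V"
  have "edges V E \<subseteq> Pow V" unfolding edges_def by auto
  then show ?thesis using \<open>finite V\<close> finite_subset by blast
qed

lemma card_edge: "simple_graph V E \<Longrightarrow> e \<in> edges V E \<Longrightarrow> card e = 2"
proof -
  assume sg: "simple_graph V E" and "e \<in> edges V E"
  then obtain a b where "e = {a,b}" "E a b" unfolding edges_def by blast
  moreover have "a \<noteq> b" using sg calculation unfolding simple_graph_def by auto
  ultimately show ?thesis by simp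
qed

lemma nonnbr:
  assumes sg: "simple_graph V E" and "card V = n" and "u \<in> V"
    and "real (degree V E u) \<ge> real n - s"
  shows "real (card {x \<in> V - {u}. \<not> E u x}) \<le> s - 1"
proof -
  have fin: "finite V" using sg unfolding simple_graph_def by auto
  have eq: "{x \<in> V - {u}. \<not> E u x} = (V - {u}) - {x \<in> V. E u x}" by auto
  have sub: "{x \<in> V. E u x} \<subseteq> V - {u}" using sg unfolding simple_graph_def by auto
  have "card {x \<in> V - {u}. \<not> E u x} = card (V - {u}) - card {x \<in> V. E u x}"
    unfolding eq by (rule card_Diff_subset) (use fin sub in \<open>auto intro: finite_subset\<close>)
  moreover have "card (V - {u}) = n - 1" using assms fin by auto
  moreover have "card {x \<in> V. E u x} \<le> card (V - {u})" using sub fin by (intro card_mono) auto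
  moreover have "n \<ge> 1" using assms fin by (metis card_0_eq empty_iff less_one not_le)
  ultimately have "real (card {x \<in> V - {u}. \<not> E u x}) = real n - 1 - real (degree V E u)"
    unfolding degree_def by (simp add: of_nat_diff)
  then show ?thesis using assms(4) by linarith
qed

lemma add_edge:
  assumes "M \<subseteq> edges V E" "mdisj M" "a \<notin> \<Union>M" "b \<notin> \<Union>M" "a \<in> V" "b \<in> V" "E a b"
    "finite M"
  shows "insert {a,b} M \<subseteq> edges V E \<and> mdisj (insert {a,b} M) \<and> card (insert {a,b} M) = Suc (card M)"
proof -
  have "{a,b} \<in> edges V E" using assms unfolding edges_def by blast
  moreover have nin: "{a,b} \<notin> M" using assms(3) by auto
  moreover have "mdisj (insert {a,b} M)"
  proof -
    have H: "\<And>f. f \<in> M \<Longrightarrow> {a,b} \<inter> f = {} \<and> f \<inter> {a,b} = {}" using assms(3,4) by auto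
    show ?thesis unfolding mdisj_def
    proof (intro ballI impI)
      fix e f assume "e \<in> insert {a, b} M" "f \<in> insert {a, b} M" "e \<noteq> f"
      then show "e \<inter> f = {}" using H assms(2) unfolding mdisj_def by (cases "e = {a,b}"; cases "f = {a,b}") auto
    qed
  qed
  ultimately show ?thesis using assms(1,8) by auto
qed

lemma exists_pm:
  assumes sg: "simple_graph V E" and cV: "card V = n" and ev: "even n"
    and deg: "\<forall>v\<in>V. real (degree V E v) \<ge> real n - s" and sm: "2*s < real n + 2"
  shows "\<exists>M. perfect_matching V E M"
proof -
  have finV: "finite V" using sg unfolding simple_graph_def by auto
  define F where "F = {M. M \<subseteq> edges V E \<and> mdisj M}"
  have finF: "finite F" unfolding F_def using finite_edges[OF finV] by auto
  have "{} \<in> F" unfolding F_def mdisj_def by auto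
  then have ne: "card ` F \<noteq> {}" by auto
  have "Max (card ` F) \<in> card ` F" using finF ne by (intro Max_in) auto
  then obtain M where MF: "M \<in> F" and Mmax0: "card M = Max (card ` F)" by auto
  have Mmax: "\<And>N. N \<in> F \<Longrightarrow> card N \<le> card M" unfolding Mmax0 using finF by auto
  have ed: "M \<subseteq> edges V E" and dj: "mdisj M" using MF unfolding F_def by auto
  have finM: "finite M" using ed finite_edges[OF finV] finite_subset by blast
  have sub: "\<Union>M \<subseteq> V" using ed unfolding edges_def by auto
  have cU: "card (\<Union>M) = 2 * card M"
  proof -
    have "card (\<Union>M) = sum card M"
    proof (rule card_Union_disjoint)
      show "pairwise disjnt M" using dj unfolding pairwise_def disjnt_def mdisj_def by auto
      show "\<And>A. A \<in> M \<Longrightarrow> finite A" using sub finV by (meson Sup_upper finite_subset subset_trans)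
    qed
    also have "\<dots> = sum (\<lambda>_. 2) M" using card_edge[OF sg] ed by (intro sum.cong) auto
    finally show ?thesis by simp
  qed
  have "\<Union>M = V"
  proof (rule ccontr)
    assume neq: "\<Union>M \<noteq> V"
    define R where "R = V - \<Union>M"
    have cR: "card R = n - 2 * card M" unfolding R_def using card_Diff_subset[of "\<Union>M" V] sub finV cU cV
      by (metis finite_subset)
    have "card (\<Union>M) \<le> n" using card_mono[OF finV sub] cV by simp

    have "R \<noteq> {}" unfolding R_def using neq sub by auto
    then have "card R \<noteq> 0" unfolding R_def using finV by auto
    moreover have "even (card R)" using cR ev \<open>card (\<Union>M) \<le> n\<close> cU by auto
    ultimately have cR2: "card R \<ge> 2" by presburger
    then obtain a where aR: "a \<in> R" by (metis card.empty ex_in_conv not_numeral_le_zero)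
    have "card (R - {a}) \<ge> 1" using cR2 aR finV unfolding R_def by auto
    then obtain b where bR: "b \<in> R - {a}" by (metis card.empty ex_in_conv not_one_le_zero)
    have a: "a \<in> V" "a \<notin> \<Union>M" and b: "b \<in> V" "b \<notin> \<Union>M" "b \<noteq> a" using aR bR unfolding R_def by auto
    have nbrA: "\<And>c. c \<in> V \<Longrightarrow> E a c \<Longrightarrow> c \<in> \<Union>M"
    proof (rule ccontr)
      fix c assume "c \<in> V" "E a c" "c \<notin> \<Union>M"
      then have "insert {a,c} M \<in> F \<and> card (insert {a,c} M) = Suc (card M)"
        using add_edge[OF ed dj a(2) _ a(1)] finM unfolding F_def by auto
      then show False using Mmax by fastforce
    qed
    have nbrB: "\<And>c. c \<in> V \<Longrightarrow> E b c \<Longrightarrow> c \<in> \<Union>M"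
    proof (rule ccontr)
      fix c assume "c \<in> V" "E b c" "c \<notin> \<Union>M"
      then have "insert {b,c} M \<in> F \<and> card (insert {b,c} M) = Suc (card M)"
        using add_edge[OF ed dj b(2) _ b(1)] finM unfolding F_def by auto
      then show False using Mmax by fastforce
    qed
    define NA where "NA = {x \<in> V. E a x}"
    define NB where "NB = {x \<in> V. E b x}"
    define p where "p = partner M"
    have NAs: "NA \<subseteq> \<Union>M" using nbrA unfolding NA_def by auto
    have NBs: "NB \<subseteq> \<Union>M" using nbrB unfolding NB_def by auto
    have injp: "inj_on p (\<Union>M)" unfolding p_def
      by (metis inj_on_inverseI partner_invol[OF sg dj ed])
    have pU: "\<And>x. x \<in> \<Union>M \<Longrightarrow> {x, p x} \<in> M \<and> p x \<noteq> x \<and> E x (p x) \<and> p x \<in> \<Union>M"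
    proof -
      fix x assume "x \<in> \<Union>M"
      then obtain e where e: "e \<in> M" "x \<in> e" by auto
      show "{x, p x} \<in> M \<and> p x \<noteq> x \<and> E x (p x) \<and> p x \<in> \<Union>M"
        using partner_mem[OF sg dj ed e] e unfolding p_def by auto
    qed
    have cpNB: "card (p ` NB) = card NB" using inj_on_subset[OF injp NBs] by (rule card_image)
    have pNB: "p ` NB \<subseteq> \<Union>M" using NBs pU by blast
    have c1: "card (NA \<union> p ` NB) \<le> card (\<Union>M)"
      using NAs pNB finite_subset[OF sub finV] by (intro card_mono) auto
    have c2: "card (NA \<union> p ` NB) + card (NA \<inter> p ` NB) = card NA + card (p ` NB)"
    proof -
      have fU: "finite (\<Union>M)" using finite_subset[OF sub finV] .
      have "finite NA" "finite (p ` NB)" using finite_subset[OF NAs fU] finite_subset[OF pNB fU] by auto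
      then show ?thesis using card_Un_Int[of NA "p ` NB"] by simp
    qed
    have c3: "real (card NA) \<ge> real n - s" using deg a(1) unfolding NA_def degree_def by auto
    have c4: "real (card NB) \<ge> real n - s" using deg b(1) unfolding NB_def degree_def by auto
    have c5: "card (\<Union>M) + 2 \<le> n" using cR cR2 cU \<open>card (\<Union>M) \<le> n\<close> by linarith
    have "real (card (NA \<union> p ` NB)) + real (card (NA \<inter> p ` NB)) = real (card NA) + real (card NB)"
      using c2 cpNB by (metis of_nat_add)
    moreover have "real (card (NA \<union> p ` NB)) + 2 \<le> real n" using c1 c5 by linarith
    ultimately have "card (NA \<inter> p ` NB) > 0" using sm c3 c4 by linarith
    then have "NA \<inter> p ` NB \<noteq> {}" by (metis card.empty less_irrefl)
    then obtain z where z: "z \<in> NA" "z \<in> p ` NB" by blast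
    then obtain y where y0: "y \<in> NB" "z = p y" by blast
    then have y: "y \<in> NB" "p y \<in> NA" using z by auto
    define x where "x = p y"
    have yU: "y \<in> \<Union>M" using y NBs by auto
    have xy: "{y, x} \<in> M" "x \<noteq> y" using pU[OF yU] unfolding x_def by auto
    have Eax: "E a x" and Eby: "E b y" and xV: "x \<in> V" and yV: "y \<in> V"
      using y unfolding x_def NA_def NB_def by auto
    define N where "N = insert {a,x} (insert {b,y} (M - {{y,x}}))"
    have xU: "x \<in> \<Union>M" using xy(1) by blast
    have ax: "a \<noteq> x" "a \<noteq> y" "b \<noteq> x" "b \<noteq> y" using a(2) b(2) xU yU by metis+
    have M1a: "M - {{y,x}} \<subseteq> edges V E" using ed by blast
    have M1b: "mdisj (M - {{y,x}})" using dj unfolding mdisj_def by blast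
    have M1c: "finite (M - {{y,x}})" using finM by blast
    note M1 = M1a M1b M1c
    have other: "z \<notin> \<Union>(M - {{y,x}})" if "z \<in> {y,x}" for z
    proof
      assume "z \<in> \<Union>(M - {{y,x}})"
      then obtain e where e: "e \<in> M" "e \<noteq> {y,x}" "z \<in> e" by auto
      have "e \<inter> {y,x} = {}" by (rule mdisjD[OF dj e(1) xy(1) e(2)])
      then show False using e(3) that by auto
    qed
    have nb: "b \<notin> \<Union>(M - {{y,x}})" "y \<notin> \<Union>(M - {{y,x}})" using b(2) other by auto
    note st1 = add_edge[OF M1(1,2) nb b(1) yV Eby M1(3)]
    have na: "a \<notin> \<Union>(insert {b,y} (M - {{y,x}}))" "x \<notin> \<Union>(insert {b,y} (M - {{y,x}}))"
      using a(2) b(3) ax other xy(2) by auto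
    have fin2: "finite (insert {b,y} (M - {{y,x}}))" using M1(3) by simp
    note st2 = add_edge[OF st1[THEN conjunct1] st1[THEN conjunct2, THEN conjunct1] na a(1) xV Eax fin2]
    have "card (M - {{y,x}}) = card M - 1" using xy finM by auto
    moreover have "card M \<ge> 1" using xy finM by (metis One_nat_def Suc_leI card_gt_0_iff empty_iff)
    moreover have "N \<in> F" unfolding F_def N_def using st2 by auto
    ultimately have "card N = Suc (card M)" unfolding N_def using st1 st2 by simp 
    then show False using Mmax \<open>N \<in> F\<close> by fastforce
  qed
  then have "perfect_matching V E M" using pm_char[OF sg] ed dj by auto
  then show ?thesis by blast
qed

lemma pm_partner:
  assumes sg: "simple_graph V E" and pm: "perfect_matching V E M" and x: "x \<in> V"
  shows "{x, partner M x} \<in> M \<and> partner M x \<noteq> x \<and> E x (partner M x) \<and> partner M x \<in> V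
     \<and> partner M (partner M x) = x"
proof -
  have h: "M \<subseteq> edges V E" "mdisj M" "\<Union>M = V" using pm pm_char[OF sg] by auto
  then obtain e where e: "e \<in> M" "x \<in> e" using x by auto
  have "partner M (partner M x) = x" using partner_invol[OF sg h(2,1)] e by blast
  then show ?thesis using partner_mem[OF sg h(2,1) e] e by auto
qed

lemma not_in_rest:
  assumes "mdisj M" "e \<in> M" "z \<in> e" "e \<in> S"
  shows "z \<notin> \<Union>(M - S)"
proof
  assume "z \<in> \<Union>(M - S)"
  then obtain f where f: "f \<in> M" "f \<notin> S" "z \<in> f" by auto
  then have "f \<noteq> e" using assms(4) by auto
  have "f \<inter> e = {}" by (rule mdisjD[OF assms(1) f(1) assms(2) \<open>f \<noteq> e\<close>])
  then show False using f(3) assms(3) by auto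
qed

lemma finite_pms:
  assumes "finite V" shows "finite (perfect_matchings V E)"
proof -
  have "perfect_matchings V E \<subseteq> Pow (edges V E)"
    unfolding perfect_matchings_def perfect_matching_def edges_def by auto
  then show ?thesis using finite_edges[OF assms] finite_subset by (metis finite_Pow_iff)
qed

lemma switch_bound:
  assumes sg: "simple_graph V E" and cV: "card V = n"
    and deg: "\<forall>w\<in>V. real (degree V E w) \<ge> real n - s"
    and u: "u \<in> V" and v: "v \<in> V" and uv: "u \<noteq> v"
  shows "real (card {M \<in> perfect_matchings V E. {u,v} \<in> M}) * (real n - 2*s)
         \<le> real (card {M \<in> perfect_matchings V E. {u,v} \<notin> M})"
proof -
  have finV: "finite V" using sg unfolding simple_graph_def by auto
  define A where "A = {M \<in> perfect_matchings V E. {u,v} \<in> M}"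
  define B where "B = {M \<in> perfect_matchings V E. {u,v} \<notin> M}"
  define G where "G M = {x \<in> V - {u,v}. E u x \<and> E v (partner M x)}" for M
  define f where "f M x = insert {u,x} (insert {v, partner M x} (M - {{u,v},{x, partner M x}}))" for M x
  define g where "g M' = insert {u,v} (insert {partner M' u, partner M' v}
      (M' - {{u, partner M' u},{v, partner M' v}}))" for M'
  have finB: "finite B" unfolding B_def using finite_pms[OF finV] by auto
  have finA: "finite A" unfolding A_def using finite_pms[OF finV] by auto
  have Afacts: "perfect_matching V E M \<and> M \<subseteq> edges V E \<and> mdisj M \<and> \<Union>M = V \<and> {u,v} \<in> M
      \<and> partner M u = v \<and> partner M v = u" if "M \<in> A" for M
  proof -
    have pm: "perfect_matching V E M" and uvM: "{u,v} \<in> M" using that unfolding A_def perfect_matchings_def by auto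
    have h: "M \<subseteq> edges V E" "mdisj M" "\<Union>M = V" using pm pm_char[OF sg] by auto
    have "partner M u = v" using partner_unique[OF h(2) uvM uv] .
    moreover have "partner M v = u" using partner_unique[OF h(2) _ uv[symmetric]] uvM by (simp add: insert_commute)
    ultimately show ?thesis using pm h uvM by auto
  qed
  have pfacts: "partner M x \<in> V - {u,v} \<and> {x, partner M x} \<in> M \<and> partner M x \<noteq> x
     \<and> E x (partner M x) \<and> partner M (partner M x) = x"
    if "M \<in> A" "x \<in> V - {u,v}" for M x
  proof -
    have af: "perfect_matching V E M" "partner M u = v" "partner M v = u" using Afacts[OF that(1)] by auto
    have pp: "{x, partner M x} \<in> M \<and> partner M x \<noteq> x \<and> E x (partner M x) \<and> partner M x \<in> V
     \<and> partner M (partner M x) = x" using pm_partner[OF sg af(1)] that(2) by auto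
    have ppx: "partner M (partner M x) = x" using pp by blast
    have "partner M x \<noteq> u"
    proof
      assume "partner M x = u" then have "x = v" using ppx af(2) by simp
      then show False using that(2) by simp
    qed
    moreover have "partner M x \<noteq> v"
    proof
      assume "partner M x = v" then have "x = u" using ppx af(3) by simp
      then show False using that(2) by simp
    qed
    ultimately show ?thesis using pp by auto
  qed
  have fB: "f M x \<in> B \<and> partner (f M x) u = x \<and> g (f M x) = M" if "M \<in> A" "x \<in> G M" for M x
  proof -
    define y where "y = partner M x"
    have xV: "x \<in> V - {u,v}" and Eux: "E u x" and Evy: "E v y" using that(2) unfolding G_def y_def by auto
    have af: "M \<subseteq> edges V E" "mdisj M" "\<Union>M = V" "{u,v} \<in> M" using Afacts[OF that(1)] by auto
    have finM: "finite M" using af(1) finite_edges[OF finV] finite_subset by blast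
    have pf: "y \<in> V - {u,v}" "{x,y} \<in> M" "y \<noteq> x" using pfacts[OF that(1) xV] unfolding y_def by auto
    define M0 where "M0 = M - {{u,v},{x,y}}"
    have M0: "M0 \<subseteq> edges V E" "mdisj M0" "finite M0" unfolding M0_def
      using af(1) apply blast
      using af(2) unfolding mdisj_def apply blast
      using finM by blast
    have nU: "u \<notin> \<Union>M0" "v \<notin> \<Union>M0" "x \<notin> \<Union>M0" "y \<notin> \<Union>M0" unfolding M0_def
      using not_in_rest[OF af(2) af(4), of u "{{u,v},{x,y}}"]
        not_in_rest[OF af(2) af(4), of v "{{u,v},{x,y}}"]
        not_in_rest[OF af(2) pf(2), of x "{{u,v},{x,y}}"]
        not_in_rest[OF af(2) pf(2), of y "{{u,v},{x,y}}"] by auto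
    note st1 = add_edge[OF M0(1,2) nU(2,4) _ _ Evy M0(3)]
    have st1': "insert {v,y} M0 \<subseteq> edges V E" "mdisj (insert {v,y} M0)" using st1 v pf(1) by auto
    have nU2: "u \<notin> \<Union>(insert {v,y} M0)" "x \<notin> \<Union>(insert {v,y} M0)" using nU uv pf xV by auto
    have fin2: "finite (insert {v,y} M0)" using M0(3) by simp
    note st2 = add_edge[OF st1'(1,2) nU2 u _ Eux fin2]
    have fe: "f M x = insert {u,x} (insert {v,y} M0)" unfolding f_def M0_def y_def by simp
    have st2': "f M x \<subseteq> edges V E" "mdisj (f M x)" using st2 xV fe by auto
    have un: "\<Union>(f M x) = V"
    proof
      show "\<Union>(f M x) \<subseteq> V" using st2'(1) unfolding edges_def by auto
      show "V \<subseteq> \<Union>(f M x)"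
      proof
        fix w assume "w \<in> V"
        then obtain e where e: "e \<in> M" "w \<in> e" using af(3) by auto
        show "w \<in> \<Union>(f M x)"
        proof (cases "e \<in> {{u,v},{x,y}}")
          case True then show ?thesis using e fe by auto
        next
          case False then have "e \<in> M0" unfolding M0_def using e by auto
          then show ?thesis using e fe by auto
        qed
      qed
    qed
    have pmf: "perfect_matching V E (f M x)" using pm_char[OF sg] st2' un by auto
    have nuv: "{u,v} \<notin> f M x" using fe nU xV pf(1) uv
      by (auto simp: doubleton_eq_iff)
    have "f M x \<in> B" using pmf nuv unfolding B_def perfect_matchings_def by auto
    moreover have pu: "partner (f M x) u = x" using partner_unique[OF st2'(2), of u x] fe xV by auto
    moreover have pv: "partner (f M x) v = y" using partner_unique[OF st2'(2), of v y] fe pf(1) by auto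
    moreover have "g (f M x) = M"
    proof -
      have "g (f M x) = insert {u,v} (insert {x,y} (f M x - {{u,x},{v,y}}))" unfolding g_def pu pv ..
      also have "f M x - {{u,x},{v,y}} = M0" using fe nU by auto
      also have "insert {u,v} (insert {x,y} M0) = M" unfolding M0_def using af(4) pf(2) by auto
      finally show ?thesis .
    qed
    ultimately show ?thesis by auto
  qed
  define P where "P = Sigma A G"
  have inj: "inj_on (\<lambda>(M,x). f M x) P"
  proof (rule inj_onI)
    fix p q assume p: "p \<in> P" and q: "q \<in> P" and eq: "(\<lambda>(M,x). f M x) p = (\<lambda>(M,x). f M x) q"
    obtain M1 x1 where p1: "p = (M1,x1)" "M1 \<in> A" "x1 \<in> G M1" using p unfolding P_def by auto
    obtain M2 x2 where q1: "q = (M2,x2)" "M2 \<in> A" "x2 \<in> G M2" using q unfolding P_def by auto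
    have e: "f M1 x1 = f M2 x2" using eq p1 q1 by simp
    have "x1 = x2" using fB[OF p1(2,3)] fB[OF q1(2,3)] e by metis
    moreover have "M1 = M2" using fB[OF p1(2,3)] fB[OF q1(2,3)] e by metis
    ultimately show "p = q" using p1 q1 by simp
  qed
  have img: "(\<lambda>(M,x). f M x) ` P \<subseteq> B" using fB unfolding P_def by auto
  have cP: "card P \<le> card B" using card_inj_on_le[OF inj img finB] .
  have finG: "finite (G M)" for M unfolding G_def using finV by auto
  have cPs: "card P = (\<Sum>M\<in>A. card (G M))" unfolding P_def using finA finG by simp
  have Gbound: "real (card (G M)) \<ge> real n - 2*s" if MA: "M \<in> A" for M
  proof -
    define B1 where "B1 = {x \<in> V - {u}. \<not> E u x}"
    define B2 where "B2 = {x \<in> V - {u,v}. \<not> E v (partner M x)}"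
    define B3 where "B3 = {x \<in> V - {v}. \<not> E v x}"
    have "V - {u,v} \<subseteq> G M \<union> B1 \<union> B2" unfolding G_def B1_def B2_def by auto
    then have "card (V - {u,v}) \<le> card (G M \<union> B1 \<union> B2)" using finV finG
      by (intro card_mono) (auto simp: B1_def B2_def)
    also have "\<dots> \<le> card (G M) + card B1 + card B2"
      by (metis card_Un_le add_le_mono1 order_trans)
    finally have c1: "card (V - {u,v}) \<le> card (G M) + card B1 + card B2" .
    have injp: "inj_on (partner M) B2"
    proof (rule inj_on_inverseI)
      fix x assume "x \<in> B2"
      then show "partner M (partner M x) = x" using pfacts[OF MA] unfolding B2_def by auto
    qed
    have "partner M ` B2 \<subseteq> B3" using pfacts[OF MA] unfolding B2_def B3_def by auto
    then have c2: "card B2 \<le> card B3" using card_inj_on_le[OF injp] finV unfolding B3_def by auto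
    have c3: "real (card B1) \<le> s - 1" unfolding B1_def using nonnbr[OF sg cV u] deg u by auto
    have c4: "real (card B3) \<le> s - 1" unfolding B3_def using nonnbr[OF sg cV v] deg v by auto
    have c5: "card (V - {u,v}) = n - 2" using finV u v uv cV by (simp add: card_Diff_subset)
    have "card {u,v} \<le> card V" using finV u v by (intro card_mono) auto
    then have "n \<ge> 2" using uv cV by simp
    then have "real (card (V - {u,v})) = real n - 2" using c5 by simp
    then show ?thesis using c1 c2 c3 c4 by linarith
  qed
  have "real (card A) * (real n - 2*s) \<le> (\<Sum>M\<in>A. real (card (G M)))"
    using sum_bounded_below[of A "real n - 2*s" "\<lambda>M. real (card (G M))"] Gbound by auto
  also have "\<dots> = real (card P)" using cPs by simp
  also have "\<dots> \<le> real (card B)" using cP by simp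
  finally show ?thesis unfolding A_def B_def .
qed

lemma arith_final:
  fixes k m r s c D :: real
  assumes r: "r \<ge> 20" and m: "m = r^2" and s: "s = r / 4000" and k: "0 \<le> k"
    and c: "c = 99 / (100 * m)" and Dd: "D = m - 2*s + 1"
    and h: "1 \<le> k * c + (m - 1 - k) / D"
  shows "k \<le> r / 9"
proof -
  have "20 * 20 \<le> r * r" using r by (intro mult_mono) auto
  then have m198: "m \<ge> 400" using m by (simp add: power2_eq_square)
  have s0: "s \<ge> 0" using s r by auto
  have "r * 1 \<le> r * r" using r by (intro mult_left_mono) auto
  then have "r \<le> m" using m by (simp add: power2_eq_square)
  then have s2: "2*s \<le> m" using s r by simp
  have Dpos: "D > 0" using Dd s2 by linarith
  have "D * 1 \<le> D * (k * c + (m - 1 - k) / D)" by (rule mult_left_mono[OF h]) (use Dpos in auto)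
  also have "\<dots> = D * (k * c) + (m - 1 - k)" using Dpos by (simp add: distrib_left)
  finally have "D \<le> D * (k * c) + (m - 1 - k)" by simp
  moreover have "k * (1 - c * D) = k - D * (k * c)" by (simp add: algebra_simps)
  ultimately have h1: "k * (1 - c * D) \<le> 2 * s" using Dd by linarith
  have mpos: "m > 0" using m198 by simp
  have "c * D = 99 * D / (100 * m)" using c by simp
  also have "\<dots> \<le> 199 / 200"
  proof -
    have "99 * D \<le> 99 * (m + 1)" using Dd s0 by simp
    also have "\<dots> \<le> 199 / 200 * (100 * m)" using m198 by simp
    finally show ?thesis using mpos by (simp add: divide_simps)
  qed
  finally have "1 - c * D \<ge> 1/200" by simp
  then have "k * (1/200) \<le> k * (1 - c * D)" using k by (intro mult_left_mono) auto
  then have "k / 200 \<le> 2 * s" using h1 by simp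
  then have "k \<le> r / 10" using s by simp
  then show ?thesis using r by simp
qed

lemma card_filter_sum:
  assumes "finite A" shows "card {x \<in> A. P x} = (\<Sum>x\<in>A. if P x then 1 else 0)"
proof -
  have "card {x \<in> A. P x} = (\<Sum>x\<in>{x \<in> A. P x}. 1)" by simp
  also have "\<dots> = (\<Sum>x\<in>A. if P x then 1 else 0)" using assms by (rule sum.inter_filter)
  finally show ?thesis .
qed

lemma card_split:
  assumes "finite A" shows "card {x \<in> A. P x} + card {x \<in> A. \<not> P x} = card A"
proof -
  have "card ({x \<in> A. P x} \<union> {x \<in> A. \<not> P x}) = card {x \<in> A. P x} + card {x \<in> A. \<not> P x}"
    by (rule card_Un_disjoint) (use assms in auto)
  moreover have "{x \<in> A. P x} \<union> {x \<in> A. \<not> P x} = A" by auto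
  ultimately show ?thesis by simp
qed

lemma sum_pairs:
  assumes sg: "simple_graph V E" and v: "v \<in> V"
  shows "(\<Sum>u\<in>V - {v}. card {M \<in> perfect_matchings V E. {u,v} \<in> M}) = card (perfect_matchings V E)"
proof -
  have finV: "finite V" using sg unfolding simple_graph_def by auto
  define PM where "PM = perfect_matchings V E"
  have finPM: "finite PM" unfolding PM_def using finite_pms[OF finV] .
  have finU: "finite (V - {v})" using finV by simp
  have one: "card {u \<in> V - {v}. {u,v} \<in> M} = 1" if "M \<in> PM" for M
  proof -
    have pm: "perfect_matching V E M" using that unfolding PM_def perfect_matchings_def by auto
    have dj: "mdisj M" using pm pm_char[OF sg] by auto
    have pp: "{v, partner M v} \<in> M" "partner M v \<noteq> v" "partner M v \<in> V" using pm_partner[OF sg pm v] by auto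
    have "{u \<in> V - {v}. {u,v} \<in> M} = {partner M v}"
    proof
      show "{partner M v} \<subseteq> {u \<in> V - {v}. {u,v} \<in> M}" using pp by (auto simp: insert_commute)
      show "{u \<in> V - {v}. {u,v} \<in> M} \<subseteq> {partner M v}"
      proof
        fix u assume "u \<in> {u \<in> V - {v}. {u,v} \<in> M}"
        then have "{v,u} \<in> M" "v \<noteq> u" by (auto simp: insert_commute)
        then show "u \<in> {partner M v}" using partner_unique[OF dj] by auto
      qed
    qed
    then show ?thesis by simp
  qed
  have "(\<Sum>u\<in>V - {v}. card {M \<in> PM. {u,v} \<in> M}) = (\<Sum>u\<in>V - {v}. \<Sum>M\<in>PM. if {u,v} \<in> M then 1 else 0)"
    using card_filter_sum[OF finPM] by simp
  also have "\<dots> = (\<Sum>M\<in>PM. \<Sum>u\<in>V - {v}. if {u,v} \<in> M then 1 else 0)" by (rule sum.swap)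
  also have "\<dots> = (\<Sum>M\<in>PM. card {u \<in> V - {v}. {u,v} \<in> M})"
    using card_filter_sum[OF finU] by simp
  also have "\<dots> = (\<Sum>M\<in>PM. 1)" using one by simp
  also have "\<dots> = card PM" by simp
  finally show ?thesis unfolding PM_def .
qed

theorem mainTheorem15:
  shows "\<exists>N::nat. \<forall>(V::nat set) E n. n \<ge> N \<longrightarrow> even n \<longrightarrow> simple_graph V E \<longrightarrow> card V = n \<longrightarrow>
     (\<forall>v\<in>V. real (degree V E v) \<ge> real n - sqrt (real n) / 4000) \<longrightarrow>
     (\<forall>v\<in>V. real (card {u \<in> V. u \<noteq> v \<and> match_prob V E u v < 99 / (100 * real n)})
               \<le> sqrt (real n) / 9)"
proof (intro exI[of _ 400] allI impI ballI)
  fix V :: "nat set" and E n v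
  assume nN: "400 \<le> n" and ev: "even n" and sg: "simple_graph V E" and cV: "card V = n"
    and deg: "\<forall>v\<in>V. real n - sqrt (real n) / 4000 \<le> real (degree V E v)" and v: "v \<in> V"
  define r where "r = sqrt (real n)"
  define s where "s = r / 4000"
  define m where "m = real n"
  define c where "c = 99 / (100 * m)"
  define D where "D = m - 2*s + 1"
  have finV: "finite V" using sg unfolding simple_graph_def by auto
  have mr: "m = r^2" unfolding m_def r_def by simp
  have s400: "sqrt 400 = (20::real)" by (rule real_sqrt_unique) auto
  have "real n \<ge> 400" using nN by simp
  then have r20: "r \<ge> 20" unfolding r_def using s400 real_sqrt_le_mono by metis
  have "r * 1 \<le> r * r" using r20 by (intro mult_left_mono) auto
  then have rm: "r \<le> m" using mr by (simp add: power2_eq_square)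
  have s2: "2 * s < m + 2" using rm r20 unfolding s_def by simp
  have deg': "\<forall>w\<in>V. real (degree V E w) \<ge> real n - s" using deg unfolding s_def r_def by auto
  obtain M0 where "perfect_matching V E M0" using exists_pm[OF sg cV ev deg'] s2 unfolding m_def by auto
  define PM where "PM = perfect_matchings V E"
  have finPM: "finite PM" unfolding PM_def using finite_pms[OF finV] .
  have "M0 \<in> PM" unfolding PM_def perfect_matchings_def using \<open>perfect_matching V E M0\<close> by simp
  then have "PM \<noteq> {}" by auto
  then have Tpos: "real (card PM) > 0" using finPM by (simp add: card_gt_0_iff)
  define T where "T = real (card PM)"
  define a where "a u = real (card {M \<in> PM. {u,v} \<in> M})" for u
  have Dpos: "D > 0" unfolding D_def using rm r20 unfolding s_def by simp
  have abound: "a u \<le> T / D" if u: "u \<in> V - {v}" for u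
  proof -
    have sb: "a u * (m - 2*s) \<le> real (card {M \<in> PM. {u,v} \<notin> M})"
      using switch_bound[OF sg cV deg', of u v] u v unfolding a_def PM_def m_def by auto
    have "card {M \<in> PM. {u,v} \<in> M} + card {M \<in> PM. {u,v} \<notin> M} = card PM"
      by (rule card_split[OF finPM])
    then have "a u + real (card {M \<in> PM. {u,v} \<notin> M}) = T" unfolding a_def T_def
      by (simp flip: of_nat_add)
    moreover have "a u * D = a u * (m - 2*s) + a u" unfolding D_def by (simp add: algebra_simps)
    ultimately have "a u * D \<le> T" using sb by linarith
    then show ?thesis using Dpos by (simp add: pos_le_divide_eq)
  qed
  have "(\<Sum>u\<in>V - {v}. a u) = real (\<Sum>u\<in>V - {v}. card {M \<in> PM. {u,v} \<in> M})"
    unfolding a_def by simp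
  then have sumT: "(\<Sum>u\<in>V - {v}. a u) = T"
    using sum_pairs[OF sg v] unfolding T_def PM_def by simp
  define K where "K = {u \<in> V. u \<noteq> v \<and> match_prob V E u v < 99 / (100 * real n)}"
  have mp: "match_prob V E u v = a u / T" for u unfolding match_prob_def a_def T_def PM_def by simp
  have KU: "K \<subseteq> V - {v}" unfolding K_def by auto
  have finU: "finite (V - {v})" using finV by simp
  have aK: "a u \<le> c * T" if "u \<in> K" for u
  proof -
    have "a u / T < c" using that unfolding K_def mp c_def m_def by simp
    then show ?thesis using Tpos unfolding T_def by (simp add: pos_divide_less_eq)
  qed
  have "T = (\<Sum>u\<in>K. a u) + (\<Sum>u\<in>(V - {v}) - K. a u)"
    using sumT sum.subset_diff[OF KU finU, of a] by simp
  also have "\<dots> \<le> real (card K) * (c * T) + real (card ((V - {v}) - K)) * (T / D)"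
  proof (rule add_mono)
    show "(\<Sum>u\<in>K. a u) \<le> real (card K) * (c * T)" by (rule sum_bounded_above) (rule aK)
    show "(\<Sum>u\<in>(V - {v}) - K. a u) \<le> real (card ((V - {v}) - K)) * (T / D)"
      by (rule sum_bounded_above) (rule abound, blast)
  qed
  finally have h0: "T \<le> real (card K) * (c * T) + real (card ((V - {v}) - K)) * (T / D)" .
  have cUK: "real (card ((V - {v}) - K)) = m - 1 - real (card K)"
  proof -
    have "card ((V - {v}) - K) = card (V - {v}) - card K" using KU finU by (simp add: card_Diff_subset finite_subset)
    moreover have "card K \<le> card (V - {v})" using KU finU by (simp add: card_mono)
    moreover have "card (V - {v}) = n - 1" using v finV cV by simp
    moreover have "n \<ge> 1" using nN by simp
    ultimately show ?thesis unfolding m_def by (simp add: of_nat_diff)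
  qed
  have "1 \<le> real (card K) * c + (m - 1 - real (card K)) / D"
  proof -
    have "T * (real (card K) * c + (m - 1 - real (card K)) / D)
        = real (card K) * (c * T) + (m - 1 - real (card K)) * (T / D)"
      by (simp add: distrib_left mult.commute mult.left_commute)
    then have "T * 1 \<le> T * (real (card K) * c + (m - 1 - real (card K)) / D)"
      using h0 cUK by simp
    then show ?thesis using Tpos unfolding T_def by (simp add: mult_le_cancel_left_pos)
  qed
  then have "real (card K) \<le> r / 9"
    using arith_final[OF r20 mr s_def _ c_def D_def] by simp
  then show "real (card {u \<in> V. u \<noteq> v \<and> match_prob V E u v < 99 / (100 * real n)}) \<le> sqrt (real n) / 9"
    unfolding K_def r_def .
qed

end
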